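(* In generalized non-signalling theory (box world), let $X$ and $Y$ be systems (each consisting of one or more boxes), let $M_X$ be a maximally informative measurement on $X$ and $M_Y$ a maximally informative measurement on $Y$. Then the product measurement $M_X\otimes M_Y$ is a maximally informative measurement on the composite system $XY$.
   Context: Box world (GNST): a box has a finite set of inputs and outputs. A system of $n$ boxes has states given by all collections $p(\mathbf{a}|\mathbf{x})\ge0$ (output tuple $\mathbf{a}$, input tuple $\mathbf{x}$) that are normalized ($\sum_{\mathbf{a}}p(\mathbf{a}|\mathbf{x})=1$ for all $\mathbf{x}$) and no-signalling (for each $i$, $\sum_{a_i}p(\mathbf{a}|\mathbf{x})$ is independent of $x_i$). An effect is any linear map $\mu$ from states to $[0,1]$; a vector $\mathbf{R}$ indexed by $(\mathbf{a},\mathbf{x})$ represents $\mu$ if $\mu(\mathbf{p})=\sum p(\mathbf{a}|\mathbf{x})R(\mathbf{a}|\mathbf{x})$ for all states. A measurement is a finite set $\{(r,\mu_r)\}$ of effects summing to the constant map $1$. If $M_X$ has effects $\mu_r$ represented by $\mathbf{R}_r$ and $M_Y$ has effects $\nu_s$ represented by $\mathbf{S}_s$, then $M_X\otimes M_Y$ is the measurement on $XY$ with outcomes $(r,s)$ and effects represented by the tensor products $\mathbf{R}_r\otimes\mathbf{S}_s$ (performing $M_X$ on $X$ and $M_Y$ on $Y$ independently). A measurement $N=\{(s,\nu_s)\}$ refines $M=\{(r,\mu_r)\}$ if the outcomes of $N$ can be partitioned into sets $P_r$ with $\mu_r=\sum_{s\in P_r}\nu_s$; the refinement is trivial if $\nu_s\propto\mu_r$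 whenever $s\in P_r$. A measurement is maximally informative if it has no non-trivial refinement. *)

theory Defs
  imports Complex_Main
begin

(* A system of boxes: list of boxes, box i = (number of inputs, number of outputs);
   inputs of box i are {0..<fst(sys!i)}, outputs {0..<snd(sys!i)}.
   Composite system XY = X @ Y. *)
type_synonym system = "(nat \<times> nat) list"

(* Vectors indexed by (output tuple a, input tuple x); states p a x = p(a|x). *)
type_synonym vec = "nat list \<Rightarrow> nat list \<Rightarrow> real"

definition inputs :: "system \<Rightarrow> nat list set" where
  "inputs sys = {x. length x = length sys \<and> (\<forall>i<length sys. x ! i < fst (sys ! i))}"

definition outputs :: "system \<Rightarrow> nat list set" where
  "outputs sys = {a. length a = length sys \<and> (\<forall>i<length sys. a ! i < snd (sys ! i))}"

definition index_set :: "system \<Rightarrow> (nat list \<times> nat list) set" where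
  "index_set sys = outputs sys \<times> inputs sys"

definition states :: "system \<Rightarrow> vec set" where
  "states sys = {p.
     (\<forall>a\<in>outputs sys. \<forall>x\<in>inputs sys. 0 \<le> p a x) \<and>
     (\<forall>x\<in>inputs sys. (\<Sum>a\<in>outputs sys. p a x) = 1) \<and>
     (\<forall>i<length sys. \<forall>a\<in>outputs sys. \<forall>x\<in>inputs sys. \<forall>x'\<in>inputs sys.
        (\<forall>j. j \<noteq> i \<longrightarrow> x ! j = x' ! j) \<longrightarrow>
        (\<Sum>b<snd (sys ! i). p (a[i := b]) x) = (\<Sum>b<snd (sys ! i). p (a[i := b]) x'))}"

definition pair :: "system \<Rightarrow> vec \<Rightarrow> vec \<Rightarrow> real" where
  "pair sys R p = (\<Sum>(a, x)\<in>index_set sys. p a x * R a x)"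

definition represents :: "system \<Rightarrow> vec \<Rightarrow> (vec \<Rightarrow> real) \<Rightarrow> bool" where
  "represents sys R \<mu> \<longleftrightarrow> (\<forall>p\<in>states sys. \<mu> p = pair sys R p)"

(* effect: linear map from states to [0,1] (linearity = representability by a vector) *)
definition is_effect :: "system \<Rightarrow> (vec \<Rightarrow> real) \<Rightarrow> bool" where
  "is_effect sys \<mu> \<longleftrightarrow> (\<exists>R. represents sys R \<mu>) \<and>
     (\<forall>p\<in>states sys. 0 \<le> \<mu> p \<and> \<mu> p \<le> 1)"

definition measurement :: "system \<Rightarrow> 'r set \<Rightarrow> ('r \<Rightarrow> vec \<Rightarrow> real) \<Rightarrow> bool" where
  "measurement sys Os \<mu> \<longleftrightarrow> finite Os \<and> (\<forall>r\<in>Os. is_effect sys (\<mu> r)) \<and>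
     (\<forall>p\<in>states sys. (\<Sum>r\<in>Os. \<mu> r p) = 1)"

definition refines_via :: "system \<Rightarrow> 's set \<Rightarrow> ('s \<Rightarrow> vec \<Rightarrow> real) \<Rightarrow> ('s \<Rightarrow> 'r)
      \<Rightarrow> 'r set \<Rightarrow> ('r \<Rightarrow> vec \<Rightarrow> real) \<Rightarrow> bool" where
  "refines_via sys Ns \<nu> f Os \<mu> \<longleftrightarrow> (\<forall>s\<in>Ns. f s \<in> Os) \<and>
     (\<forall>r\<in>Os. \<forall>p\<in>states sys. \<mu> r p = (\<Sum>s\<in>{s\<in>Ns. f s = r}. \<nu> s p))"

definition trivial_refinement :: "system \<Rightarrow> 's set \<Rightarrow> ('s \<Rightarrow> vec \<Rightarrow> real) \<Rightarrow> ('s \<Rightarrow> 'r)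
      \<Rightarrow> ('r \<Rightarrow> vec \<Rightarrow> real) \<Rightarrow> bool" where
  "trivial_refinement sys Ns \<nu> f \<mu> \<longleftrightarrow>
     (\<forall>s\<in>Ns. \<exists>c::real. \<forall>p\<in>states sys. \<nu> s p = c * \<mu> (f s) p)"

(* refining measurements are taken with outcomes labelled by naturals (w.l.o.g.,
   any finite outcome set can be relabelled) *)
definition max_informative :: "system \<Rightarrow> 'r set \<Rightarrow> ('r \<Rightarrow> vec \<Rightarrow> real) \<Rightarrow> bool" where
  "max_informative sys Os \<mu> \<longleftrightarrow> measurement sys Os \<mu> \<and>
     (\<forall>(Ns::nat set) \<nu> f. measurement sys Ns \<nu> \<and> refines_via sys Ns \<nu> f Os \<mu> \<longrightarrow>
        trivial_refinement sys Ns \<nu> f \<mu>)"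

definition tensor :: "system \<Rightarrow> vec \<Rightarrow> vec \<Rightarrow> vec" where
  "tensor X R S = (\<lambda>a x. R (take (length X) a) (take (length X) x) *
                         S (drop (length X) a) (drop (length X) x))"

definition prod_meas_effects :: "system \<Rightarrow> system \<Rightarrow> ('r \<Rightarrow> vec) \<Rightarrow> ('s \<Rightarrow> vec)
      \<Rightarrow> ('r \<times> 's) \<Rightarrow> vec \<Rightarrow> real" where
  "prod_meas_effects X Y R S = (\<lambda>(r, s) p. pair (X @ Y) (tensor X (R r) (S s)) p)"

end

theory Submission
  imports Defs
begin

definition tup :: "((nat \<times> nat) \<Rightarrow> nat) \<Rightarrow> system \<Rightarrow> nat list set" where
  "tup f sys = {a. length a = length sys \<and> (\<forall>i<length sys. a ! i < f (sys ! i))}"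

lemma outputs_tup: "outputs sys = tup snd sys" by (simp add: outputs_def tup_def)
lemma inputs_tup: "inputs sys = tup fst sys" by (simp add: inputs_def tup_def)

lemma finite_tup: "finite (tup f sys)"
proof -
  let ?A = "\<Union>i<length sys. {..<f (sys ! i)}"
  have "tup f sys \<subseteq> {xs. set xs \<subseteq> ?A \<and> length xs = length sys}"
    by (auto simp: tup_def in_set_conv_nth; blast)
  moreover have "finite {xs. set xs \<subseteq> ?A \<and> length xs = length sys}"
    by (rule finite_lists_length_eq) auto
  ultimately show ?thesis by (rule finite_subset)
qed

lemma finite_outputs[simp]: "finite (outputs sys)" by (simp add: outputs_tup finite_tup)
lemma finite_inputs[simp]: "finite (inputs sys)" by (simp add: inputs_tup finite_tup)
lemma finite_index_set[simp]: "finite (index_set sys)" by (simp add: index_set_def)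

lemma tup_append_mem: "a \<in> tup f X \<Longrightarrow> b \<in> tup f Y \<Longrightarrow> a @ b \<in> tup f (X @ Y)"
  by (auto simp: tup_def nth_append)

lemma tup_len: "a \<in> tup f X \<Longrightarrow> length a = length X" by (simp add: tup_def)

lemma tup_split:
  assumes c: "c \<in> tup f (X @ Y)"
  shows "take (length X) c \<in> tup f X \<and> drop (length X) c \<in> tup f Y"
proof -
  have lc: "length c = length X + length Y" and b: "\<forall>i<length X + length Y. c ! i < f ((X @ Y) ! i)"
    using c by (auto simp: tup_def)
  have "\<forall>i<length X. take (length X) c ! i < f (X ! i)"
  proof (intro allI impI)
    fix i assume i: "i < length X"
    then have "i < length X + length Y" by simp
    then have "c ! i < f ((X @ Y) ! i)" using b by blast
    then show "take (length X) c ! i < f (X ! i)" using i by (simp add: nth_append)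
  qed
  moreover have "\<forall>i<length Y. drop (length X) c ! i < f (Y ! i)"
  proof (intro allI impI)
    fix i assume i: "i < length Y"
    then have "length X + i < length X + length Y" by simp
    then have "c ! (length X + i) < f ((X @ Y) ! (length X + i))" using b by blast
    then show "drop (length X) c ! i < f (Y ! i)" using i lc by (simp add: nth_append nth_drop)
  qed
  ultimately show ?thesis using lc by (simp add: tup_def)
qed

lemma tup_append_eq: "tup f (X @ Y) = (\<lambda>(a,b). a @ b) ` (tup f X \<times> tup f Y)"
proof
  show "tup f (X @ Y) \<subseteq> (\<lambda>(a,b). a @ b) ` (tup f X \<times> tup f Y)"
  proof
    fix c assume c: "c \<in> tup f (X @ Y)"
    then have "c = (\<lambda>(a,b). a @ b) (take (length X) c, drop (length X) c)" by simp
    then show "c \<in> (\<lambda>(a,b). a @ b) ` (tup f X \<times> tup f Y)" using tup_split[OF c] by blast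
  qed
qed (auto intro: tup_append_mem)

lemma inj_append_tup: "inj_on (\<lambda>(a,b). a @ b) (tup f X \<times> tup f Y)"
  by (auto simp: inj_on_def tup_def)

lemma sum_tup_append: "(\<Sum>c\<in>tup f (X @ Y). g c) = (\<Sum>a\<in>tup f X. \<Sum>b\<in>tup f Y. g (a @ b))"
proof -
  have "sum g (tup f (X@Y)) = sum (g \<circ> (\<lambda>(a,b). a@b)) (tup f X \<times> tup f Y)"
    by (simp add: tup_append_eq sum.reindex[OF inj_append_tup])
  also have "\<dots> = (\<Sum>(a,b)\<in>tup f X \<times> tup f Y. g (a @ b))"
    by (rule sum.cong) auto
  finally show ?thesis by (simp add: sum.cartesian_product)
qed

lemma sum_outputs_append: "(\<Sum>c\<in>outputs (X @ Y). g c) = (\<Sum>a\<in>outputs X. \<Sum>b\<in>outputs Y. g (a @ b))"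
  by (simp add: outputs_tup sum_tup_append)
lemma sum_inputs_append: "(\<Sum>c\<in>inputs (X @ Y). g c) = (\<Sum>a\<in>inputs X. \<Sum>b\<in>inputs Y. g (a @ b))"
  by (simp add: inputs_tup sum_tup_append)

lemma pair_eq: "pair sys V P = (\<Sum>a\<in>outputs sys. \<Sum>x\<in>inputs sys. P a x * V a x)"
  by (simp add: pair_def index_set_def sum.cartesian_product)

lemma pair_append: "pair (X @ Y) V P =
  (\<Sum>a\<in>outputs X. \<Sum>x\<in>inputs X. \<Sum>b\<in>outputs Y. \<Sum>y\<in>inputs Y. P (a@b) (x@y) * V (a@b) (x@y))"
  unfolding pair_eq sum_outputs_append sum_inputs_append
  by (rule sum.cong[OF refl], rule sum.swap)

definition nsvec :: "system \<Rightarrow> vec \<Rightarrow> bool" where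
  "nsvec sys p \<longleftrightarrow> (\<forall>i<length sys. \<forall>a\<in>outputs sys. \<forall>x\<in>inputs sys. \<forall>x'\<in>inputs sys.
        (\<forall>j. j \<noteq> i \<longrightarrow> x ! j = x' ! j) \<longrightarrow>
        (\<Sum>b<snd (sys ! i). p (a[i := b]) x) = (\<Sum>b<snd (sys ! i). p (a[i := b]) x'))"

definition cone :: "system \<Rightarrow> vec \<Rightarrow> real \<Rightarrow> bool" where
  "cone sys p t \<longleftrightarrow> 0 \<le> t \<and> (\<forall>a\<in>outputs sys. \<forall>x\<in>inputs sys. 0 \<le> p a x) \<and>
     (\<forall>x\<in>inputs sys. (\<Sum>a\<in>outputs sys. p a x) = t) \<and> nsvec sys p"

lemma states_cone: "p \<in> states sys \<longleftrightarrow> cone sys p 1"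
  by (simp add: states_def cone_def nsvec_def)

lemma nth_beyond: "length xs = length ys \<Longrightarrow> length xs \<le> j \<Longrightarrow> xs ! j = ys ! j"
  by (induct xs ys arbitrary: j rule: list_induct2) (auto simp: nth_Cons split: nat.split)

lemma split_coord:
  assumes i: "i < length sys" and k: "0 < snd (sys ! i)"
  shows "(\<Sum>a\<in>outputs sys. g a) = (\<Sum>a\<in>{a\<in>outputs sys. a ! i = 0}. \<Sum>b<snd (sys ! i). g (a[i := b]))"
proof -
  let ?A = "{a\<in>outputs sys. a ! i = 0}" and ?k = "snd (sys ! i)"
  let ?h = "\<lambda>(a, b). a[i := b]"
  have inj: "inj_on ?h (?A \<times> {..<?k})"
  proof (rule inj_onI, clarify)
    fix a b a' b' assume a: "a \<in> outputs sys" "a ! i = 0" "b < ?k" and a': "a' \<in> outputs sys" "a' ! i = 0" "b' < ?k"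
      and eq: "a[i := b] = a'[i := b']"
    have la: "length a = length sys" "length a' = length sys" using a a' by (auto simp: outputs_def)
    have "b = b'" using arg_cong[OF eq, of "\<lambda>l. l ! i"] i la by simp
    moreover have "a = a'"
    proof -
      have "a = (a[i := b])[i := 0]" using a(2) by (metis list_update_id list_update_overwrite)
      also have "\<dots> = (a'[i := b'])[i := 0]" using eq by simp
      also have "\<dots> = a'" using a'(2) by (metis list_update_id list_update_overwrite)
      finally show ?thesis .
    qed
    ultimately show "a = a' \<and> b = b'" by simp
  qed
  have img: "?h ` (?A \<times> {..<?k}) = outputs sys"
  proof
    show "?h ` (?A \<times> {..<?k}) \<subseteq> outputs sys"
      by (auto simp: outputs_def nth_list_update) (metis nth_list_update_eq nth_list_update_neq)
    show "outputs sys \<subseteq> ?h ` (?A \<times> {..<?k})"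
    proof
      fix c assume c: "c \<in> outputs sys"
      have lc: "length c = length sys" using c by (simp add: outputs_def)
      have "c = ?h (c[i := 0], c ! i)" by simp
      moreover have "c[i := 0] \<in> ?A" using c k i lc by (auto simp: outputs_def nth_list_update)
      moreover have "c ! i < ?k" using c i by (simp add: outputs_def)
      ultimately show "c \<in> ?h ` (?A \<times> {..<?k})" by blast
    qed
  qed
  have "(\<Sum>a\<in>outputs sys. g a) = sum (g \<circ> ?h) (?A \<times> {..<?k})"
    using sum.reindex[OF inj, of g] img by simp
  also have "\<dots> = (\<Sum>(a,b)\<in>?A \<times> {..<?k}. g (a[i := b]))"
    by (rule sum.cong) auto
  finally show ?thesis by (simp add: sum.cartesian_product)
qed

lemma ns_step:
  assumes ns: "nsvec sys p" and i: "i < length sys" and x: "x \<in> inputs sys" and x': "x' \<in> inputs sys"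
    and agree: "\<forall>j. j \<noteq> i \<longrightarrow> x ! j = x' ! j"
  shows "(\<Sum>a\<in>outputs sys. p a x) = (\<Sum>a\<in>outputs sys. p a x')"
proof (cases "snd (sys ! i) = 0")
  case True
  then have "outputs sys = {}" using i by (auto simp: outputs_def)
  then show ?thesis by simp
next
  case False
  then have k: "0 < snd (sys ! i)" by simp
  show ?thesis
    unfolding split_coord[OF i k, of "\<lambda>a. p a x"] split_coord[OF i k, of "\<lambda>a. p a x'"]
  proof (rule sum.cong[OF refl])
    fix a assume "a \<in> {a \<in> outputs sys. a ! i = 0}"
    then have "a \<in> outputs sys" by simp
    then show "(\<Sum>b<snd (sys ! i). p (a[i := b]) x) = (\<Sum>b<snd (sys ! i). p (a[i := b]) x')"
      using ns i x x' agree unfolding nsvec_def by blast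
  qed
qed

lemma ns_total:
  assumes ns: "nsvec sys p" and x: "x \<in> inputs sys" and x': "x' \<in> inputs sys"
  shows "(\<Sum>a\<in>outputs sys. p a x) = (\<Sum>a\<in>outputs sys. p a x')"
proof -
  let ?n = "length sys"
  define z where "z j = map (\<lambda>i. if i < j then x' ! i else x ! i) [0..<?n]" for j
  have lx: "length x = ?n" "length x' = ?n" using x x' by (auto simp: inputs_def)
  have zin: "z j \<in> inputs sys" for j
    using x x' by (auto simp: inputs_def z_def)
  have z0: "z 0 = x" using lx map_nth[of x] by (simp add: z_def)
  have zn: "z ?n = x'"
  proof -
    have "z ?n = map ((!) x') [0..<?n]" unfolding z_def by (rule map_cong) auto
    then show ?thesis using lx map_nth[of x'] by simp
  qed
  have "j \<le> ?n \<Longrightarrow> (\<Sum>a\<in>outputs sys. p a x) = (\<Sum>a\<in>outputs sys. p a (z j))" for j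
  proof (induct j)
    case 0 then show ?case by (simp add: z0)
  next
    case (Suc j)
    have "(\<Sum>a\<in>outputs sys. p a (z j)) = (\<Sum>a\<in>outputs sys. p a (z (Suc j)))"
    proof (rule ns_step[OF ns _ zin zin])
      show "j < ?n" using Suc by simp
      show "\<forall>ja. ja \<noteq> j \<longrightarrow> z j ! ja = z (Suc j) ! ja"
      proof (intro allI impI)
        fix ja assume "ja \<noteq> j"
        show "z j ! ja = z (Suc j) ! ja"
        proof (cases "ja < ?n")
          case True then show ?thesis using \<open>ja \<noteq> j\<close> by (simp add: z_def)
        next
          case False then show ?thesis by (intro nth_beyond) (simp_all add: z_def)
        qed
      qed
    qed
    then show ?case using Suc by simp
  qed
  from this[of ?n] show ?thesis by (simp add: zn)
qed

lemma nsvecD: "nsvec sys p \<Longrightarrow> i < length sys \<Longrightarrow> a \<in> outputs sys \<Longrightarrow> x \<in> inputs sys \<Longrightarrow> x' \<in> inputs sys \<Longrightarrow>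
   (\<forall>j. j \<noteq> i \<longrightarrow> x ! j = x' ! j) \<Longrightarrow> (\<Sum>b<snd (sys ! i). p (a[i := b]) x) = (\<Sum>b<snd (sys ! i). p (a[i := b]) x')"
  unfolding nsvec_def by blast

lemma outputs_split: "c \<in> outputs (X @ Y) \<Longrightarrow> take (length X) c \<in> outputs X \<and> drop (length X) c \<in> outputs Y"
  by (simp add: outputs_tup tup_split)
lemma inputs_split: "c \<in> inputs (X @ Y) \<Longrightarrow> take (length X) c \<in> inputs X \<and> drop (length X) c \<in> inputs Y"
  by (simp add: inputs_tup tup_split)
lemma outputs_app: "a \<in> outputs X \<Longrightarrow> b \<in> outputs Y \<Longrightarrow> a @ b \<in> outputs (X @ Y)"
  by (simp add: outputs_tup tup_append_mem)
lemma inputs_app: "a \<in> inputs X \<Longrightarrow> b \<in> inputs Y \<Longrightarrow> a @ b \<in> inputs (X @ Y)"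
  by (simp add: inputs_tup tup_append_mem)
lemma outputs_len: "a \<in> outputs X \<Longrightarrow> length a = length X" by (simp add: outputs_def)
lemma inputs_len: "a \<in> inputs X \<Longrightarrow> length a = length X" by (simp add: inputs_def)

lemma tensor_app: "length a = length X \<Longrightarrow> length x = length X \<Longrightarrow> tensor X p q (a @ b) (x @ y) = p a x * q b y"
  by (simp add: tensor_def)

lemma agree_take:
  assumes "\<forall>j. j \<noteq> i \<longrightarrow> z ! j = z' ! j" "length z = length z'"
  shows "\<forall>j. j \<noteq> i \<longrightarrow> take n z ! j = take n z' ! j"
proof (intro allI impI)
  fix j assume "j \<noteq> i"
  show "take n z ! j = take n z' ! j"
  proof (cases "j < length (take n z)")
    case True then show ?thesis using assms \<open>j \<noteq> i\<close> by simp
  next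
    case False then show ?thesis using assms by (intro nth_beyond) auto
  qed
qed

lemma agree_drop:
  assumes "\<forall>j. j \<noteq> i \<longrightarrow> z ! j = z' ! j" "length z = length z'" "n \<le> i" "n \<le> length z"
  shows "\<forall>j. j \<noteq> i - n \<longrightarrow> drop n z ! j = drop n z' ! j"
proof (intro allI impI)
  fix j assume "j \<noteq> i - n"
  show "drop n z ! j = drop n z' ! j"
  proof (cases "j < length (drop n z)")
    case True then show ?thesis using assms \<open>j \<noteq> i - n\<close> by (simp add: nth_drop)
  next
    case False then show ?thesis using assms by (intro nth_beyond) auto
  qed
qed

lemma take_eq_agree:
  assumes "\<forall>j. j \<noteq> i \<longrightarrow> z ! j = z' ! j" "length z = length z'" "n \<le> i"
  shows "take n z = take n z'"
  using assms by (intro nth_equalityI) auto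

lemma drop_eq_agree:
  assumes "\<forall>j. j \<noteq> i \<longrightarrow> z ! j = z' ! j" "length z = length z'" "i < n"
  shows "drop n z = drop n z'"
  using assms by (intro nth_equalityI) (auto simp: nth_drop)

lemma prod_state:
  assumes p: "p \<in> states X" and q: "q \<in> states Y"
  shows "tensor X p q \<in> states (X @ Y)"
proof -
  let ?n = "length X"
  have pc: "cone X p 1" and qc: "cone Y q 1" using p q by (simp_all add: states_cone)
  have nonneg: "\<forall>c\<in>outputs (X @ Y). \<forall>z\<in>inputs (X @ Y). 0 \<le> tensor X p q c z"
  proof (intro ballI)
    fix c z assume c: "c \<in> outputs (X @ Y)" and z: "z \<in> inputs (X @ Y)"
    show "0 \<le> tensor X p q c z"
      using outputs_split[OF c] inputs_split[OF z] pc qc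
      by (auto simp: tensor_def cone_def intro!: mult_nonneg_nonneg)
  qed
  have norm: "\<forall>z\<in>inputs (X @ Y). (\<Sum>c\<in>outputs (X @ Y). tensor X p q c z) = 1"
  proof
    fix z assume z: "z \<in> inputs (X @ Y)"
    have "(\<Sum>c\<in>outputs (X @ Y). tensor X p q c z)
        = (\<Sum>a\<in>outputs X. \<Sum>b\<in>outputs Y. p a (take ?n z) * q b (drop ?n z))"
      unfolding sum_outputs_append
      by (intro sum.cong refl) (simp add: tensor_def outputs_len)
    also have "\<dots> = (\<Sum>a\<in>outputs X. p a (take ?n z)) * (\<Sum>b\<in>outputs Y. q b (drop ?n z))"
      by (simp add: sum_product)
    also have "\<dots> = 1" using inputs_split[OF z] pc qc by (simp add: cone_def)
    finally show "(\<Sum>c\<in>outputs (X @ Y). tensor X p q c z) = 1" .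
  qed
  have ns: "nsvec (X @ Y) (tensor X p q)"
    unfolding nsvec_def
  proof (intro allI impI ballI)
    fix i c z z'
    assume i: "i < length (X @ Y)" and c: "c \<in> outputs (X @ Y)" and z: "z \<in> inputs (X @ Y)"
      and z': "z' \<in> inputs (X @ Y)" and ag: "\<forall>j. j \<noteq> i \<longrightarrow> z ! j = z' ! j"
    have lz: "length z = length z'" using z z' by (simp add: inputs_len)
    have lzn: "?n \<le> length z" using z by (simp add: inputs_len)
    have cs: "take ?n c \<in> outputs X" "drop ?n c \<in> outputs Y" using outputs_split[OF c] by auto
    have zs: "take ?n z \<in> inputs X" "drop ?n z \<in> inputs Y" using inputs_split[OF z] by auto
    have zs': "take ?n z' \<in> inputs X" "drop ?n z' \<in> inputs Y" using inputs_split[OF z'] by auto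
    show "(\<Sum>b<snd ((X @ Y) ! i). tensor X p q (c[i := b]) z) = (\<Sum>b<snd ((X @ Y) ! i). tensor X p q (c[i := b]) z')"
    proof (cases "i < ?n")
      case True
      have de: "drop ?n z = drop ?n z'" using drop_eq_agree[OF ag lz True] .
      have ns_p: "(\<Sum>b<snd (X ! i). p ((take ?n c)[i := b]) (take ?n z)) = (\<Sum>b<snd (X ! i). p ((take ?n c)[i := b]) (take ?n z'))"
        using pc True cs zs zs' agree_take[OF ag lz, of ?n] unfolding cone_def by (intro nsvecD) auto
      have "(\<Sum>b<snd ((X @ Y) ! i). tensor X p q (c[i := b]) z)
          = (\<Sum>b<snd (X ! i). p ((take ?n c)[i := b]) (take ?n z)) * q (drop ?n c) (drop ?n z)"
        using True by (simp add: tensor_def nth_append take_update_swap sum_distrib_right)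
      also have "\<dots> = (\<Sum>b<snd (X ! i). p ((take ?n c)[i := b]) (take ?n z')) * q (drop ?n c) (drop ?n z')"
        using ns_p de by simp
      also have "\<dots> = (\<Sum>b<snd ((X @ Y) ! i). tensor X p q (c[i := b]) z')"
        using True by (simp add: tensor_def nth_append take_update_swap sum_distrib_right)
      finally show ?thesis .
    next
      case False
      then have ni: "?n \<le> i" by simp
      have te: "take ?n z = take ?n z'" using take_eq_agree[OF ag lz ni] .
      have il: "i - ?n < length Y" using i False by simp
      have ns_q: "(\<Sum>b<snd (Y ! (i - ?n)). q ((drop ?n c)[i - ?n := b]) (drop ?n z)) = (\<Sum>b<snd (Y ! (i - ?n)). q ((drop ?n c)[i - ?n := b]) (drop ?n z'))"
        using qc il cs zs zs' agree_drop[OF ag lz ni lzn] unfolding cone_def by (intro nsvecD) auto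
      have "(\<Sum>b<snd ((X @ Y) ! i). tensor X p q (c[i := b]) z)
          = p (take ?n c) (take ?n z) * (\<Sum>b<snd (Y ! (i - ?n)). q ((drop ?n c)[i - ?n := b]) (drop ?n z))"
        using ni by (simp add: tensor_def nth_append drop_update_swap sum_distrib_left)
      also have "\<dots> = p (take ?n c) (take ?n z') * (\<Sum>b<snd (Y ! (i - ?n)). q ((drop ?n c)[i - ?n := b]) (drop ?n z'))"
        using ns_q te by simp
      also have "\<dots> = (\<Sum>b<snd ((X @ Y) ! i). tensor X p q (c[i := b]) z')"
        using ni by (simp add: tensor_def nth_append drop_update_swap sum_distrib_left)
      finally show ?thesis .
    qed
  qed
  show ?thesis using nonneg norm ns by (simp add: states_cone cone_def)
qed

lemma ns_right:
  assumes ns: "nsvec (X @ Y) P" and a: "a \<in> outputs X" and x: "x \<in> inputs X"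
  shows "nsvec Y (\<lambda>b y. P (a @ b) (x @ y))"
  unfolding nsvec_def
proof (intro allI impI ballI)
  fix i b y y' assume i: "i < length Y" and b: "b \<in> outputs Y" and y: "y \<in> inputs Y" and y': "y' \<in> inputs Y"
    and ag: "\<forall>j. j \<noteq> i \<longrightarrow> y ! j = y' ! j"
  let ?n = "length X"
  have la: "length a = ?n" "length x = ?n" using a x by (simp_all add: outputs_len inputs_len)
  have ag2: "\<forall>j. j \<noteq> ?n + i \<longrightarrow> (x @ y) ! j = (x @ y') ! j"
    using ag la by (auto simp: nth_append)
  have "(\<Sum>c<snd ((X @ Y) ! (?n + i)). P ((a @ b)[?n + i := c]) (x @ y)) = (\<Sum>c<snd ((X @ Y) ! (?n + i)). P ((a @ b)[?n + i := c]) (x @ y'))"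
    by (rule nsvecD[OF ns _ outputs_app[OF a b] inputs_app[OF x y] inputs_app[OF x y'] ag2]) (use i in simp)
  then show "(\<Sum>c<snd (Y ! i). P (a @ b[i := c]) (x @ y)) = (\<Sum>c<snd (Y ! i). P (a @ b[i := c]) (x @ y'))"
    using la by (simp add: nth_append list_update_append)
qed

lemma ns_left:
  assumes ns: "nsvec (X @ Y) P" and b: "b \<in> outputs Y" and y: "y \<in> inputs Y"
  shows "nsvec X (\<lambda>a x. P (a @ b) (x @ y))"
  unfolding nsvec_def
proof (intro allI impI ballI)
  fix i a x x' assume i: "i < length X" and a: "a \<in> outputs X" and x: "x \<in> inputs X" and x': "x' \<in> inputs X"
    and ag: "\<forall>j. j \<noteq> i \<longrightarrow> x ! j = x' ! j"
  let ?n = "length X"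
  have la: "length a = ?n" "length x = ?n" "length x' = ?n" using a x x' by (simp_all add: outputs_len inputs_len)
  have ag2: "\<forall>j. j \<noteq> i \<longrightarrow> (x @ y) ! j = (x' @ y) ! j"
    using ag la by (auto simp: nth_append)
  have "(\<Sum>c<snd ((X @ Y) ! i). P ((a @ b)[i := c]) (x @ y)) = (\<Sum>c<snd ((X @ Y) ! i). P ((a @ b)[i := c]) (x' @ y))"
    by (rule nsvecD[OF ns _ outputs_app[OF a b] inputs_app[OF x y] inputs_app[OF x' y] ag2]) (use i in simp)
  then show "(\<Sum>c<snd (X ! i). P (a[i := c] @ b) (x @ y)) = (\<Sum>c<snd (X ! i). P (a[i := c] @ b) (x' @ y))"
    using la i by (simp add: nth_append list_update_append)
qed

lemma cone_of_ns:
  assumes nn: "\<forall>a\<in>outputs sys. \<forall>x\<in>inputs sys. 0 \<le> p a x" and ns: "nsvec sys p"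
  shows "\<exists>t. cone sys p t"
proof (cases "inputs sys = {}")
  case True then show ?thesis using nn ns by (auto simp: cone_def)
next
  case False
  then obtain x0 where x0: "x0 \<in> inputs sys" by blast
  let ?t = "\<Sum>a\<in>outputs sys. p a x0"
  have t0: "0 \<le> ?t" using nn x0 by (intro sum_nonneg) blast
  have tt: "\<forall>x\<in>inputs sys. (\<Sum>a\<in>outputs sys. p a x) = ?t" using ns_total[OF ns _ x0] by blast
  have "cone sys p ?t" unfolding cone_def using t0 tt nn ns by blast
  then show ?thesis by blast
qed

lemma cone_scale:
  assumes c: "cone sys p t" and t: "0 < t"
  shows "(\<lambda>a x. p a x / t) \<in> states sys"
proof -
  have nn: "\<forall>a\<in>outputs sys. \<forall>x\<in>inputs sys. 0 \<le> p a x / t"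
    using c t by (simp add: cone_def)
  have nm: "\<forall>x\<in>inputs sys. (\<Sum>a\<in>outputs sys. p a x / t) = 1"
    using c t by (simp add: cone_def sum_divide_distrib[symmetric])
  have ns: "nsvec sys (\<lambda>a x. p a x / t)"
    unfolding nsvec_def
  proof (intro allI impI ballI)
    fix i a x x' assume "i < length sys" "a \<in> outputs sys" "x \<in> inputs sys" "x' \<in> inputs sys"
      "\<forall>j. j \<noteq> i \<longrightarrow> x ! j = x' ! j"
    then have "(\<Sum>b<snd (sys ! i). p (a[i := b]) x) = (\<Sum>b<snd (sys ! i). p (a[i := b]) x')"
      using c by (intro nsvecD) (auto simp: cone_def)
    then show "(\<Sum>b<snd (sys ! i). p (a[i := b]) x / t) = (\<Sum>b<snd (sys ! i). p (a[i := b]) x' / t)"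
      by (simp add: sum_divide_distrib[symmetric])
  qed
  show ?thesis unfolding states_cone cone_def using nn nm ns by simp
qed

lemma cone_zero:
  assumes c: "cone sys p 0" and a: "a \<in> outputs sys" and x: "x \<in> inputs sys"
  shows "p a x = 0"
proof -
  have "(\<Sum>a\<in>outputs sys. p a x) = 0" "\<forall>a\<in>outputs sys. 0 \<le> p a x" using c x by (auto simp: cone_def)
  then show ?thesis using a by (simp add: sum_nonneg_eq_0_iff)
qed

lemma pair_scale: "pair sys V (\<lambda>a x. p a x / t) = pair sys V p / t"
  by (simp add: pair_def sum_divide_distrib case_prod_beta)

lemma pair_cone_zero: "cone sys p 0 \<Longrightarrow> pair sys V p = 0"
  by (auto simp: pair_def index_set_def cone_zero intro!: sum.neutral)

lemma cone_pair_vanish: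
  assumes v: "\<forall>q\<in>states sys. pair sys V q = 0" and c: "cone sys p t"
  shows "pair sys V p = 0"
proof (cases "t = 0")
  case True then show ?thesis using c pair_cone_zero by simp
next
  case False
  then have t: "0 < t" using c by (simp add: cone_def)
  have "pair sys V p / t = 0" using v cone_scale[OF c t] pair_scale[of sys V p t] by simp
  then show ?thesis using t by simp
qed

lemma cone_effect:
  assumes e: "is_effect sys \<mu>" and r: "represents sys R \<mu>" and c: "cone sys p t"
  shows "0 \<le> pair sys R p \<and> pair sys R p \<le> t"
proof (cases "t = 0")
  case True then show ?thesis using c pair_cone_zero by simp
next
  case False
  then have t: "0 < t" using c by (simp add: cone_def)
  have st: "(\<lambda>a x. p a x / t) \<in> states sys" using cone_scale[OF c t] .
  have "\<mu> (\<lambda>a x. p a x / t) = pair sys R p / t" using r st pair_scale[of sys R p t] by (simp add: represents_def)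
  moreover have "0 \<le> \<mu> (\<lambda>a x. p a x / t) \<and> \<mu> (\<lambda>a x. p a x / t) \<le> 1" using e st by (simp add: is_effect_def)
  ultimately show ?thesis using t by (simp add: divide_le_eq_1 zero_le_divide_iff)
qed

lemma pair_diff: "pair sys V (\<lambda>c z. A c z - B c z) = pair sys V A - pair sys V B"
  by (simp add: pair_def case_prod_beta left_diff_distrib sum_subtractf)
lemma pair_cmult: "pair sys V (\<lambda>c z. r * A c z) = r * pair sys V A"
  by (simp add: pair_def case_prod_beta sum_distrib_left mult.assoc)
lemma pair_sumP: "pair sys V (\<lambda>c z. \<Sum>i\<in>I. F i c z) = (\<Sum>i\<in>I. pair sys V (F i))"
  by (simp add: pair_def case_prod_beta sum_distrib_right sum.swap[of _ I])
lemma pair_congP: "(\<forall>c\<in>outputs sys. \<forall>z\<in>inputs sys. P c z = P' c z) \<Longrightarrow> pair sys V P = pair sys V P'"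
  by (auto simp: pair_def index_set_def intro!: sum.cong)
lemma pair_diffV: "pair sys (\<lambda>c z. A c z - r * B c z) P = pair sys A P - r * pair sys B P"
  by (simp add: pair_def case_prod_beta right_diff_distrib sum_subtractf sum_distrib_left algebra_simps)
lemma pair_sumV: "pair sys (\<lambda>c z. \<Sum>i\<in>I. F i c z) P = (\<Sum>i\<in>I. pair sys (F i) P)"
  by (simp add: pair_def case_prod_beta sum_distrib_left sum.swap[of _ I])

lemma tensor_assoc: "tensor (X @ Y) (tensor X p q) r = tensor X p (tensor Y q r)"
  by (simp add: tensor_def take_take drop_take drop_drop mult.assoc add.commute)

lemma pair_tensor_right: "pair (X @ Y) V (tensor X p q) =
   pair X (\<lambda>a x. \<Sum>b\<in>outputs Y. \<Sum>y\<in>inputs Y. V (a @ b) (x @ y) * q b y) p"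
  apply (subst pair_append, subst pair_eq)
  apply (rule sum.cong[OF refl])+
  apply (simp add: tensor_app outputs_len inputs_len sum_distrib_left mult_ac)
  done

lemma sum4_swap: "(\<Sum>a\<in>A. \<Sum>x\<in>I. \<Sum>w\<in>K. \<Sum>v\<in>J. f a x w v) = (\<Sum>w\<in>K. \<Sum>v\<in>J. \<Sum>a\<in>A. \<Sum>x\<in>I. (f a x w v::real))"
proof -
  have "(\<Sum>a\<in>A. \<Sum>x\<in>I. \<Sum>w\<in>K. \<Sum>v\<in>J. f a x w v) = (\<Sum>a\<in>A. \<Sum>w\<in>K. \<Sum>x\<in>I. \<Sum>v\<in>J. f a x w v)"
    by (simp only: sum.swap[of _ I K])
  also have "\<dots> = (\<Sum>a\<in>A. \<Sum>w\<in>K. \<Sum>v\<in>J. \<Sum>x\<in>I. f a x w v)"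
    by (simp only: sum.swap[of _ I J])
  also have "\<dots> = (\<Sum>w\<in>K. \<Sum>a\<in>A. \<Sum>v\<in>J. \<Sum>x\<in>I. f a x w v)" by (simp only: sum.swap[of _ A K])
  also have "\<dots> = (\<Sum>w\<in>K. \<Sum>v\<in>J. \<Sum>a\<in>A. \<Sum>x\<in>I. f a x w v)"
    by (simp only: sum.swap[of _ A J])
  finally show ?thesis .
qed

lemma pair_tensor_left: "pair (X @ Y) V (tensor X p q) =
   pair Y (\<lambda>b y. \<Sum>a\<in>outputs X. \<Sum>x\<in>inputs X. V (a @ b) (x @ y) * p a x) q"
proof -
  have "pair (X @ Y) V (tensor X p q) = (\<Sum>a\<in>outputs X. \<Sum>x\<in>inputs X. \<Sum>b\<in>outputs Y. \<Sum>y\<in>inputs Y. q b y * (V (a @ b) (x @ y) * p a x))"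
    unfolding pair_append
    apply (rule sum.cong[OF refl])+
    apply (simp add: tensor_app outputs_len inputs_len)
    done
  also have "\<dots> = (\<Sum>b\<in>outputs Y. \<Sum>y\<in>inputs Y. \<Sum>a\<in>outputs X. \<Sum>x\<in>inputs X. q b y * (V (a @ b) (x @ y) * p a x))"
    by (rule sum4_swap)
  also have "\<dots> = pair Y (\<lambda>b y. \<Sum>a\<in>outputs X. \<Sum>x\<in>inputs X. V (a @ b) (x @ y) * p a x) q"
    unfolding pair_eq by (simp only: sum_distrib_left)
  finally show ?thesis .
qed

lemma pair_tensor_prod: "pair (X @ Y) (tensor X R S) (tensor X p q) = pair X R p * pair Y S q"
proof -
  have "pair (X @ Y) (tensor X R S) (tensor X p q) = (\<Sum>a\<in>outputs X. \<Sum>x\<in>inputs X. \<Sum>b\<in>outputs Y. \<Sum>y\<in>inputs Y. (p a x * R a x) * (q b y * S b y))"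
    unfolding pair_append
    apply (rule sum.cong[OF refl])+
    apply (simp add: tensor_app outputs_len inputs_len mult_ac)
    done
  also have "\<dots> = (\<Sum>a\<in>outputs X. \<Sum>x\<in>inputs X. (p a x * R a x) * pair Y S q)"
    unfolding pair_eq by (simp only: sum_distrib_left)
  also have "\<dots> = pair X R p * pair Y S q"
    unfolding pair_eq by (simp only: sum_distrib_right)
  finally show ?thesis .
qed

lemma single_tup: "tup f [B] = (\<lambda>b. [b]) ` {..<f B}"
proof
  show "tup f [B] \<subseteq> (\<lambda>b. [b]) ` {..<f B}"
  proof
    fix a assume a: "a \<in> tup f [B]"
    then have "length a = 1" "a ! 0 < f B" by (auto simp: tup_def)
    then have "a = [a ! 0]" by (cases a) auto
    then show "a \<in> (\<lambda>b. [b]) ` {..<f B}" using \<open>a ! 0 < f B\<close> by blast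
  qed
qed (auto simp: tup_def)

lemma single_state:
  assumes nn: "\<forall>a\<in>outputs [B]. \<forall>x\<in>inputs [B]. 0 \<le> g a x"
    and nm: "\<forall>x\<in>inputs [B]. (\<Sum>a\<in>outputs [B]. g a x) = 1"
  shows "g \<in> states [B]"
proof -
  have sw: "(\<Sum>b<snd B. g [b] x) = (\<Sum>a\<in>outputs [B]. g a x)" for x
    by (simp add: outputs_tup single_tup sum.reindex inj_on_def)
  have ns: "nsvec [B] g" unfolding nsvec_def
  proof (intro allI impI ballI)
    fix i a x x' assume i: "i < length [B]" and a: "a \<in> outputs [B]" and x: "x \<in> inputs [B]" and x': "x' \<in> inputs [B]"
    have i0: "i = 0" using i by simp
    have la: "length a = 1" using a by (simp add: outputs_len)
    then have upd: "a[i := b] = [b]" for b using i0 by (cases a) auto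
    show "(\<Sum>b<snd ([B] ! i). g (a[i := b]) x) = (\<Sum>b<snd ([B] ! i). g (a[i := b]) x')"
      using i0 upd sw nm x x' by simp
  qed
  show ?thesis unfolding states_cone cone_def using nn nm ns by simp
qed

lemma nsvec_sum:
  assumes "\<forall>j\<in>J. nsvec sys (F j)"
  shows "nsvec sys (\<lambda>a x. \<Sum>j\<in>J. F j a x)"
  unfolding nsvec_def
proof (intro allI impI ballI)
  fix i a x x' assume h: "i < length sys" "a \<in> outputs sys" "x \<in> inputs sys" "x' \<in> inputs sys"
    "\<forall>j. j \<noteq> i \<longrightarrow> x ! j = x' ! j"
  have "(\<Sum>b<snd (sys ! i). \<Sum>j\<in>J. F j (a[i := b]) x) = (\<Sum>j\<in>J. \<Sum>b<snd (sys ! i). F j (a[i := b]) x)"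
    by (rule sum.swap)
  also have "\<dots> = (\<Sum>j\<in>J. \<Sum>b<snd (sys ! i). F j (a[i := b]) x')"
    using assms h by (intro sum.cong refl nsvecD) auto
  also have "\<dots> = (\<Sum>b<snd (sys ! i). \<Sum>j\<in>J. F j (a[i := b]) x')"
    by (rule sum.swap)
  finally show "(\<Sum>b<snd (sys ! i). \<Sum>j\<in>J. F j (a[i := b]) x) = (\<Sum>b<snd (sys ! i). \<Sum>j\<in>J. F j (a[i := b]) x')" .
qed

lemma states_nil: "(\<lambda>a x. 1) \<in> states []"
  by (simp add: states_cone cone_def nsvec_def outputs_tup inputs_tup tup_def)

lemma sum_delta_mult:
  assumes "a \<in> A" "finite A"
  shows "(\<Sum>a'\<in>A. (if a = a' then 1 else 0) * (f a' :: real)) = f a"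
proof -
  have "(\<Sum>a'\<in>A. (if a = a' then 1 else 0) * f a') = (\<Sum>a'\<in>A. if a = a' then f a else 0)"
    by (rule sum.cong) auto
  also have "\<dots> = f a" using assms by simp
  finally show ?thesis .
qed

lemma span_step:
  fixes B :: "nat \<times> nat" and W :: system
  assumes claim: "\<And>p Q t. p \<in> states [B] \<Longrightarrow> cone W Q t \<Longrightarrow> pair ([B] @ W) V (tensor [B] p Q) = 0"
    and P: "P \<in> states ([B] @ W)"
  shows "pair ([B] @ W) V P = 0"
proof (cases "outputs [B] = {} \<or> inputs [B] = {}")
  case True
  have e1: "outputs ([B] @ W) = (\<lambda>(a,b). a @ b) ` (outputs [B] \<times> outputs W)"
    by (simp only: outputs_tup tup_append_eq)
  have e2: "inputs ([B] @ W) = (\<lambda>(a,b). a @ b) ` (inputs [B] \<times> inputs W)"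
    by (simp only: inputs_tup tup_append_eq)
  from True have "outputs ([B] @ W) = {} \<or> inputs ([B] @ W) = {}"
    unfolding e1 e2 by auto
  then show ?thesis by (auto simp: pair_eq)
next
  case False
  let ?O1 = "outputs [B]" and ?I1 = "inputs [B]"
  obtain a0 x0 where a0: "a0 \<in> ?O1" and x0: "x0 \<in> ?I1" using False by blast
  have Pc: "cone ([B] @ W) P 1" using P by (simp add: states_cone)
  have Pnn: "\<forall>c\<in>outputs ([B] @ W). \<forall>z\<in>inputs ([B] @ W). 0 \<le> P c z" using Pc by (simp add: cone_def)
  have Pns: "nsvec ([B] @ W) P" using Pc by (simp add: cone_def)
  define pp :: "nat list \<Rightarrow> nat list \<Rightarrow> vec" where "pp x' a' = (\<lambda>a x. if x = x' then (if a = a' then 1 else 0) else (if a = a0 then 1 else (0::real)))" for x' a'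
  define d0 where "d0 = (\<lambda>(a::nat list) (x::nat list). if a = a0 then 1 else (0::real))"
  define Q :: "nat list \<Rightarrow> nat list \<Rightarrow> vec" where "Q x' a' = (\<lambda>w v. P (a' @ w) (x' @ v))" for x' a'
  define PW :: vec where "PW = (\<lambda>w v. \<Sum>a'\<in>?O1. P (a' @ w) (x0 @ v))"
  define cc where "cc = real (card ?I1 - 1)"
  have pp_st: "pp x' a' \<in> states [B]" if "a' \<in> ?O1" for x' a'
  proof (rule single_state)
    show "\<forall>a\<in>?O1. \<forall>x\<in>?I1. 0 \<le> pp x' a' a x" by (simp add: pp_def)
    show "\<forall>x\<in>?I1. (\<Sum>a\<in>?O1. pp x' a' a x) = 1"
    proof
      fix x assume "x \<in> ?I1"
      show "(\<Sum>a\<in>?O1. pp x' a' a x) = 1"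
        using that a0 by (cases "x = x'") (simp_all add: pp_def)
    qed
  qed
  have d0_st: "d0 \<in> states [B]"
    by (rule single_state) (use a0 in \<open>simp_all add: d0_def\<close>)
  have Q_cone: "\<exists>t. cone W (Q x' a') t" if "a' \<in> ?O1" "x' \<in> ?I1" for x' a'
  proof (rule cone_of_ns)
    show "\<forall>w\<in>outputs W. \<forall>v\<in>inputs W. 0 \<le> Q x' a' w v"
    proof (intro ballI)
      fix w v assume w: "w \<in> outputs W" and v: "v \<in> inputs W"
      show "0 \<le> Q x' a' w v" unfolding Q_def
        using Pnn[rule_format, OF outputs_app[OF that(1) w] inputs_app[OF that(2) v]] .
    qed
    show "nsvec W (Q x' a')" unfolding Q_def by (rule ns_right[OF Pns that])
  qed
  have PW_cone: "\<exists>t. cone W PW t"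
  proof (rule cone_of_ns)
    show "\<forall>w\<in>outputs W. \<forall>v\<in>inputs W. 0 \<le> PW w v"
    proof (intro ballI)
      fix w v assume w: "w \<in> outputs W" and v: "v \<in> inputs W"
      show "0 \<le> PW w v" unfolding PW_def
        using Pnn[rule_format, OF outputs_app[OF _ w] inputs_app[OF x0 v]] by (intro sum_nonneg) blast
    qed
    show "nsvec W PW" unfolding PW_def
      by (rule nsvec_sum) (use ns_right[OF Pns _ x0] in blast)
  qed
  have marg: "(\<Sum>a'\<in>?O1. P (a' @ w) (x' @ v)) = PW w v" if "x' \<in> ?I1" "w \<in> outputs W" "v \<in> inputs W" for x' w v
    unfolding PW_def using ns_total[OF ns_left[OF Pns that(2,3)] that(1) x0] by simp
  have decomp: "P (a @ w) (x @ v) = (\<Sum>x'\<in>?I1. \<Sum>a'\<in>?O1. pp x' a' a x * Q x' a' w v) - cc * (d0 a x * PW w v)"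
    if a: "a \<in> ?O1" and x: "x \<in> ?I1" and w: "w \<in> outputs W" and v: "v \<in> inputs W" for a x w v
  proof -
    have fin: "finite ?I1" by simp
    have "(\<Sum>x'\<in>?I1. \<Sum>a'\<in>?O1. pp x' a' a x * Q x' a' w v)
        = (\<Sum>a'\<in>?O1. pp x a' a x * Q x a' w v) + (\<Sum>x'\<in>?I1 - {x}. \<Sum>a'\<in>?O1. pp x' a' a x * Q x' a' w v)"
      using sum.remove[OF fin x] by simp
    also have "(\<Sum>a'\<in>?O1. pp x a' a x * Q x a' w v) = P (a @ w) (x @ v)"
      using a by (simp add: pp_def Q_def sum_delta_mult)
    also have "(\<Sum>x'\<in>?I1 - {x}. \<Sum>a'\<in>?O1. pp x' a' a x * Q x' a' w v) = (\<Sum>x'\<in>?I1 - {x}. d0 a x * PW w v)"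
    proof (rule sum.cong[OF refl])
      fix x' assume x': "x' \<in> ?I1 - {x}"
      have "(\<Sum>a'\<in>?O1. pp x' a' a x * Q x' a' w v) = d0 a x * (\<Sum>a'\<in>?O1. P (a' @ w) (x' @ v))"
        using x' by (cases "x = x'") (auto simp: pp_def d0_def Q_def sum_distrib_left)
      also have "\<dots> = d0 a x * PW w v" using marg[of x' w v] x' w v by simp
      finally show "(\<Sum>a'\<in>?O1. pp x' a' a x * Q x' a' w v) = d0 a x * PW w v" .
    qed
    also have "\<dots> = cc * (d0 a x * PW w v)"
      using x by (simp add: cc_def card_Diff_singleton)
    finally show ?thesis by simp
  qed
  let ?T = "\<lambda>x' a'. tensor [B] (pp x' a') (Q x' a')"
  have Peq: "\<forall>c\<in>outputs ([B] @ W). \<forall>z\<in>inputs ([B] @ W).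
      P c z = (\<Sum>x'\<in>?I1. \<Sum>a'\<in>?O1. ?T x' a' c z) - cc * tensor [B] d0 PW c z"
  proof (intro ballI)
    fix c z assume c: "c \<in> outputs ([B] @ W)" and z: "z \<in> inputs ([B] @ W)"
    let ?a = "take 1 c" and ?w = "drop 1 c" and ?x = "take 1 z" and ?v = "drop 1 z"
    have cs: "?a \<in> ?O1" "?w \<in> outputs W" using outputs_split[OF c] by auto
    have zs: "?x \<in> ?I1" "?v \<in> inputs W" using inputs_split[OF z] by auto
    have la: "length ?a = length [B]" "length ?x = length [B]" using outputs_len[OF cs(1)] inputs_len[OF zs(1)] by blast+
    have ce: "c = ?a @ ?w" and ze: "z = ?x @ ?v" by simp_all
    have "P c z = P (?a @ ?w) (?x @ ?v)" using ce ze by simp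
    also have "\<dots> = (\<Sum>x'\<in>?I1. \<Sum>a'\<in>?O1. pp x' a' ?a ?x * Q x' a' ?w ?v) - cc * (d0 ?a ?x * PW ?w ?v)"
      by (rule decomp[OF cs(1) zs(1) cs(2) zs(2)])
    also have "\<dots> = (\<Sum>x'\<in>?I1. \<Sum>a'\<in>?O1. ?T x' a' (?a @ ?w) (?x @ ?v)) - cc * tensor [B] d0 PW (?a @ ?w) (?x @ ?v)"
      using la by (simp only: tensor_app)
    finally show "P c z = (\<Sum>x'\<in>?I1. \<Sum>a'\<in>?O1. ?T x' a' c z) - cc * tensor [B] d0 PW c z"
      using ce ze by simp
  qed
  have "pair ([B] @ W) V P = pair ([B] @ W) V (\<lambda>c z. (\<Sum>x'\<in>?I1. \<Sum>a'\<in>?O1. ?T x' a' c z) - cc * tensor [B] d0 PW c z)"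
    by (rule pair_congP[OF Peq])
  also have "\<dots> = (\<Sum>x'\<in>?I1. \<Sum>a'\<in>?O1. pair ([B] @ W) V (?T x' a')) - cc * pair ([B] @ W) V (tensor [B] d0 PW)"
    by (simp only: pair_diff pair_sumP pair_cmult)
  also have "\<dots> = 0"
  proof -
    have "pair ([B] @ W) V (?T x' a') = 0" if "x' \<in> ?I1" "a' \<in> ?O1" for x' a'
      using Q_cone[OF that(2,1)] pp_st[OF that(2)] claim by blast
    moreover have "pair ([B] @ W) V (tensor [B] d0 PW) = 0"
      using PW_cone d0_st claim by blast
    ultimately show ?thesis by simp
  qed
  finally show ?thesis .
qed

lemma span:
  "\<forall>V. (\<forall>p\<in>states X. \<forall>q\<in>states Y. pair (X @ Y) V (tensor X p q) = 0) \<longrightarrow>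
       (\<forall>P\<in>states (X @ Y). pair (X @ Y) V P = 0)"
proof (induct X)
  case Nil
  show ?case
  proof (intro allI impI ballI)
    fix V P assume H: "\<forall>p\<in>states []. \<forall>q\<in>states Y. pair ([] @ Y) V (tensor [] p q) = 0"
      and P: "P \<in> states ([] @ Y)"
    have "tensor [] (\<lambda>a x. 1) P = P" by (simp add: tensor_def)
    then show "pair ([] @ Y) V P = 0" using H states_nil P by force
  qed
next
  case (Cons B X')
  show ?case
  proof (intro allI impI ballI)
    fix V P
    assume H: "\<forall>p\<in>states (B # X'). \<forall>q\<in>states Y. pair ((B # X') @ Y) V (tensor (B # X') p q) = 0"
      and P: "P \<in> states ((B # X') @ Y)"
    let ?W = "X' @ Y"
    have claim: "pair ([B] @ ?W) V (tensor [B] p Q) = 0" if p: "p \<in> states [B]" and Q: "cone ?W Q t" for p Q t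
    proof -
      define Vp where "Vp = (\<lambda>b y. \<Sum>a\<in>outputs [B]. \<Sum>x\<in>inputs [B]. V (a @ b) (x @ y) * p a x)"
      have "\<forall>r\<in>states X'. \<forall>s\<in>states Y. pair (X' @ Y) Vp (tensor X' r s) = 0"
      proof (intro ballI)
        fix r s assume r: "r \<in> states X'" and s: "s \<in> states Y"
        have "pair (X' @ Y) Vp (tensor X' r s) = pair ([B] @ (X' @ Y)) V (tensor [B] p (tensor X' r s))"
          unfolding Vp_def by (rule pair_tensor_left[symmetric])
        also have "\<dots> = pair (([B] @ X') @ Y) V (tensor ([B] @ X') (tensor [B] p r) s)"
          by (simp only: tensor_assoc append_assoc)
        also have "\<dots> = 0"
          using H s prod_state[OF p r] by simp
        finally show "pair (X' @ Y) Vp (tensor X' r s) = 0" .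
      qed
      then have "\<forall>q\<in>states ?W. pair ?W Vp q = 0" using Cons by blast
      then have "pair ?W Vp Q = 0" using cone_pair_vanish Q by blast
      then show ?thesis unfolding Vp_def by (simp only: pair_tensor_left)
    qed
    have "pair ([B] @ ?W) V P = 0"
      by (rule span_step[OF claim]) (use P in simp_all)
    then show "pair ((B # X') @ Y) V P = 0" by simp
  qed
qed

lemma extremal:
  fixes Os :: "'r set" and \<mu> :: "'r \<Rightarrow> vec \<Rightarrow> real"
  assumes mi: "max_informative sys Os \<mu>" and r: "r \<in> Os"
    and rep: "\<forall>p\<in>states sys. \<phi> p = pair sys W p"
    and bnd: "\<forall>p\<in>states sys. 0 \<le> \<phi> p \<and> \<phi> p \<le> \<mu> r p"
  shows "\<exists>c. \<forall>p\<in>states sys. \<phi> p = c * \<mu> r p"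
proof -
  have meas: "measurement sys Os \<mu>" using mi by (simp add: max_informative_def)
  then have finO: "finite Os" and eff: "\<forall>r\<in>Os. is_effect sys (\<mu> r)" and tot: "\<forall>p\<in>states sys. (\<Sum>r\<in>Os. \<mu> r p) = 1"
    by (auto simp: measurement_def)
  obtain n :: nat and g where Osg: "Os = g ` {i. i < n}" and inj: "inj_on g {i. i < n}"
    using finite_imp_nat_seg_image_inj_on[OF finO] by blast
  have Osg': "Os = g ` {..<n}" and inj': "inj_on g {..<n}" using Osg inj by (simp_all add: lessThan_def)
  obtain i0 where i0: "i0 < n" "g i0 = r" using r Osg' by blast
  have "\<forall>r'\<in>Os. \<exists>R. represents sys R (\<mu> r')" using eff by (simp add: is_effect_def)
  then obtain Rf where Rf: "\<forall>r'\<in>Os. represents sys (Rf r') (\<mu> r')" by metis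
  define Ns :: "nat set" where "Ns = {..<Suc n}"
  define \<nu> :: "nat \<Rightarrow> vec \<Rightarrow> real" where
    "\<nu> j = (if j = 0 then \<phi> else (\<lambda>p. \<mu> (g (j - 1)) p - (if j - 1 = i0 then 1 else 0) * \<phi> p))" for j
  define F :: "nat \<Rightarrow> 'r" where "F j = (if j = 0 then r else g (j - 1))" for j
  have eff_r: "0 \<le> \<mu> r p \<and> \<mu> r p \<le> 1" if "p \<in> states sys" for p
    using eff r that by (simp add: is_effect_def)
  have meN: "measurement sys Ns \<nu>"
    unfolding measurement_def
  proof (intro conjI ballI)
    show "finite Ns" by (simp add: Ns_def)
  next
    fix j assume j: "j \<in> Ns"
    show "is_effect sys (\<nu> j)"
    proof (cases "j = 0")
      case True
      then show ?thesis using rep bnd eff_r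
        by (auto simp: is_effect_def \<nu>_def represents_def intro: order_trans)
    next
      case False
      let ?i = "j - 1"
      have i: "?i < n" using j False by (simp add: Ns_def)
      have gi: "g ?i \<in> Os" using i Osg' by blast
      let ?c = "if ?i = i0 then 1 else (0::real)"
      have repj: "represents sys (\<lambda>a x. Rf (g ?i) a x - ?c * W a x) (\<nu> j)"
        unfolding represents_def
      proof
        fix p assume p: "p \<in> states sys"
        show "\<nu> j p = pair sys (\<lambda>a x. Rf (g ?i) a x - ?c * W a x) p"
          using False p rep Rf gi by (simp only: pair_diffV \<nu>_def represents_def) simp
      qed
      have rng: "0 \<le> \<nu> j p \<and> \<nu> j p \<le> 1" if p: "p \<in> states sys" for p
      proof (cases "?i = i0")
        case True
        then show ?thesis using False bnd[rule_format, OF p] eff_r[OF p] i0 by (auto simp: \<nu>_def)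
      next
        case F: False
        then show ?thesis using False p eff gi by (simp add: \<nu>_def is_effect_def)
      qed
      show ?thesis using repj rng by (auto simp: is_effect_def)
    qed
  next
    fix p assume p: "p \<in> states sys"
    have "(\<Sum>j\<in>Ns. \<nu> j p) = \<nu> 0 p + (\<Sum>i<n. \<nu> (Suc i) p)"
      unfolding Ns_def by (rule sum.lessThan_Suc_shift)
    also have "(\<Sum>i<n. \<nu> (Suc i) p) = (\<Sum>i<n. \<mu> (g i) p) - (\<Sum>i<n. (if i = i0 then 1 else 0) * \<phi> p)"
      by (simp add: \<nu>_def sum_subtractf)
    also have "(\<Sum>i<n. (if i = i0 then 1 else 0) * \<phi> p) = \<phi> p"
      using i0 by (simp add: if_distrib[of "\<lambda>u. u * \<phi> p"] cong: if_cong)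
    also have "(\<Sum>i<n. \<mu> (g i) p) = (\<Sum>r\<in>Os. \<mu> r p)"
      unfolding Osg' by (simp add: sum.reindex[OF inj'])
    finally show "(\<Sum>j\<in>Ns. \<nu> j p) = 1" using tot p by (simp add: \<nu>_def)
  qed
  have refN: "refines_via sys Ns \<nu> F Os \<mu>"
    unfolding refines_via_def
  proof (intro conjI ballI)
    fix j assume "j \<in> Ns"
    then show "F j \<in> Os" using r Osg' by (auto simp: F_def Ns_def)
  next
    fix r' p assume r': "r' \<in> Os" and p: "p \<in> states sys"
    obtain i' where i': "i' < n" "g i' = r'" using r' Osg' by blast
    have Fi: "F (Suc i) = r' \<longleftrightarrow> i = i'" if "i < n" for i
      using inj' i' that by (auto simp: F_def inj_on_def)
    show "\<mu> r' p = (\<Sum>j\<in>{j \<in> Ns. F j = r'}. \<nu> j p)"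
    proof (cases "r' = r")
      case True
      then have ii: "i' = i0" using i' i0 inj' by (auto simp: inj_on_def)
      have "{j \<in> Ns. F j = r'} = {0, Suc i'}"
      proof
        show "{j \<in> Ns. F j = r'} \<subseteq> {0, Suc i'}"
        proof
          fix j assume "j \<in> {j \<in> Ns. F j = r'}"
          then have "j < Suc n" "F j = r'" by (auto simp: Ns_def)
          then show "j \<in> {0, Suc i'}" using Fi[of "j - 1"] by (cases j) auto
        qed
        show "{0, Suc i'} \<subseteq> {j \<in> Ns. F j = r'}" using True i' by (auto simp: Ns_def F_def)
      qed
      then show ?thesis using True ii i0 by (simp add: \<nu>_def)
    next
      case False
      have "{j \<in> Ns. F j = r'} = {Suc i'}"
      proof
        show "{j \<in> Ns. F j = r'} \<subseteq> {Suc i'}"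
        proof
          fix j assume "j \<in> {j \<in> Ns. F j = r'}"
          then have "j < Suc n" "F j = r'" by (auto simp: Ns_def)
          then show "j \<in> {Suc i'}" using Fi[of "j - 1"] False by (cases j) (auto simp: F_def)
        qed
        show "{Suc i'} \<subseteq> {j \<in> Ns. F j = r'}" using i' by (auto simp: Ns_def F_def)
      qed
      moreover have "i' \<noteq> i0" using False i' i0 by auto
      ultimately show ?thesis using i' by (simp add: \<nu>_def)
    qed
  qed
  have "trivial_refinement sys Ns \<nu> F \<mu>"
    using mi meN refN unfolding max_informative_def by blast
  then obtain c where "\<forall>p\<in>states sys. \<nu> 0 p = c * \<mu> (F 0) p"
    unfolding trivial_refinement_def Ns_def by blast
  then show ?thesis by (auto simp: \<nu>_def F_def)
qed

lemma pair_tensor_vec: "pair (X @ Y) (tensor X R S) P = pair X R (\<lambda>a x. pair Y S (\<lambda>b y. P (a @ b) (x @ y)))"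
  apply (subst pair_append, subst pair_eq, subst pair_eq)
  apply (rule sum.cong[OF refl])+
  apply (simp add: tensor_app outputs_len inputs_len sum_distrib_left sum_distrib_right mult_ac)
  done

lemma prod_nonneg:
  assumes eR: "is_effect X \<mu>" "represents X R \<mu>" and eS: "is_effect Y \<nu>" "represents Y S \<nu>"
    and P: "P \<in> states (X @ Y)"
  shows "0 \<le> pair (X @ Y) (tensor X R S) P"
proof -
  have Pc: "cone (X @ Y) P 1" using P by (simp add: states_cone)
  have Pnn: "\<forall>c\<in>outputs (X @ Y). \<forall>z\<in>inputs (X @ Y). 0 \<le> P c z" using Pc by (simp add: cone_def)
  have Pns: "nsvec (X @ Y) P" using Pc by (simp add: cone_def)
  define g where "g = (\<lambda>a x. pair Y S (\<lambda>b y. P (a @ b) (x @ y)))"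
  have gnn: "\<forall>a\<in>outputs X. \<forall>x\<in>inputs X. 0 \<le> g a x"
  proof (intro ballI)
    fix a x assume a: "a \<in> outputs X" and x: "x \<in> inputs X"
    have "\<exists>t. cone Y (\<lambda>b y. P (a @ b) (x @ y)) t"
    proof (rule cone_of_ns)
      show "\<forall>b\<in>outputs Y. \<forall>y\<in>inputs Y. 0 \<le> P (a @ b) (x @ y)"
        using Pnn outputs_app[OF a] inputs_app[OF x] by blast
      show "nsvec Y (\<lambda>b y. P (a @ b) (x @ y))" by (rule ns_right[OF Pns a x])
    qed
    then show "0 \<le> g a x" unfolding g_def using cone_effect[OF eS] by blast
  qed
  have gns: "nsvec X g" unfolding nsvec_def
  proof (intro allI impI ballI)
    fix i a x x' assume h: "i < length X" "a \<in> outputs X" "x \<in> inputs X" "x' \<in> inputs X"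
      "\<forall>j. j \<noteq> i \<longrightarrow> x ! j = x' ! j"
    have "(\<Sum>c<snd (X ! i). g (a[i := c]) x) = pair Y S (\<lambda>b y. \<Sum>c<snd (X ! i). P (a[i := c] @ b) (x @ y))"
      unfolding g_def by (simp only: pair_sumP)
    also have "\<dots> = pair Y S (\<lambda>b y. \<Sum>c<snd (X ! i). P (a[i := c] @ b) (x' @ y))"
    proof (rule pair_congP, intro ballI)
      fix b y assume b: "b \<in> outputs Y" and y: "y \<in> inputs Y"
      show "(\<Sum>c<snd (X ! i). P (a[i := c] @ b) (x @ y)) = (\<Sum>c<snd (X ! i). P (a[i := c] @ b) (x' @ y))"
        using nsvecD[OF ns_left[OF Pns b y] h] by simp
    qed
    also have "\<dots> = (\<Sum>c<snd (X ! i). g (a[i := c]) x')"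
      unfolding g_def by (simp only: pair_sumP)
    finally show "(\<Sum>c<snd (X ! i). g (a[i := c]) x) = (\<Sum>c<snd (X ! i). g (a[i := c]) x')" .
  qed
  obtain t where "cone X g t" using cone_of_ns[OF gnn gns] by blast
  then have "0 \<le> pair X R g" using cone_effect[OF eR] by blast
  then show ?thesis unfolding g_def by (simp only: pair_tensor_vec)
qed

lemma pair_delta_input:
  assumes z0: "z0 \<in> inputs sys"
  shows "pair sys (\<lambda>c z. if z = z0 then 1 else 0) P = (\<Sum>c\<in>outputs sys. P c z0)"
  unfolding pair_eq using z0 by (simp add: if_distrib[of "\<lambda>u. _ * u"] cong: if_cong)

lemma inputs_nonempty:
  assumes m: "measurement X Os \<mu>" and rep: "\<forall>r\<in>Os. represents X (R r) (\<mu> r)"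
  shows "inputs X \<noteq> {}"
proof
  assume e: "inputs X = {}"
  let ?p = "(\<lambda>a x. 0) :: vec"
  have p: "?p \<in> states X" using e by (simp add: states_def)
  have "\<forall>r\<in>Os. \<mu> r ?p = 0" using rep p e by (simp add: represents_def pair_eq)
  moreover have "(\<Sum>r\<in>Os. \<mu> r ?p) = 1" using m p by (simp add: measurement_def)
  ultimately show False by simp
qed

theorem corollary4:
  fixes X Y :: system
    and OX :: "'r set" and \<mu> :: "'r \<Rightarrow> vec \<Rightarrow> real" and R :: "'r \<Rightarrow> vec"
    and OY :: "'s set" and \<nu> :: "'s \<Rightarrow> vec \<Rightarrow> real" and S :: "'s \<Rightarrow> vec"
  assumes "max_informative X OX \<mu>"
    and "\<forall>r\<in>OX. represents X (R r) (\<mu> r)"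
    and "max_informative Y OY \<nu>"
    and "\<forall>s\<in>OY. represents Y (S s) (\<nu> s)"
  shows "max_informative (X @ Y) (OX \<times> OY) (prod_meas_effects X Y R S)"
proof -
  note miX = assms(1) and repX = assms(2) and miY = assms(3) and repY = assms(4)
  let ?Z = "X @ Y"
  let ?E = "prod_meas_effects X Y R S"
  let ?T = "\<lambda>r s. tensor X (R r) (S s)"
  have mX: "measurement X OX \<mu>" and mY: "measurement Y OY \<nu>"
    using miX miY by (simp_all add: max_informative_def)
  have finX: "finite OX" and effX: "\<forall>r\<in>OX. is_effect X (\<mu> r)" and totX: "\<forall>p\<in>states X. (\<Sum>r\<in>OX. \<mu> r p) = 1"
    using mX by (auto simp: measurement_def)
  have finY: "finite OY" and effY: "\<forall>s\<in>OY. is_effect Y (\<nu> s)" and totY: "\<forall>q\<in>states Y. (\<Sum>s\<in>OY. \<nu> s q) = 1"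
    using mY by (auto simp: measurement_def)
  have Edef: "?E (r, s) P = pair ?Z (?T r s) P" for r s P
    by (simp add: prod_meas_effects_def)
  obtain x0 where x0: "x0 \<in> inputs X" using inputs_nonempty[OF mX repX] by blast
  obtain y0 where y0: "y0 \<in> inputs Y" using inputs_nonempty[OF mY repY] by blast
  have z0: "x0 @ y0 \<in> inputs ?Z" using inputs_app[OF x0 y0] .
  have prodv: "pair ?Z (?T r s) (tensor X p q) = \<mu> r p * \<nu> s q"
    if "r \<in> OX" "s \<in> OY" "p \<in> states X" "q \<in> states Y" for r s p q
    using that repX repY by (simp add: pair_tensor_prod represents_def)
  have nonneg: "0 \<le> pair ?Z (?T r s) P" if "r \<in> OX" "s \<in> OY" "P \<in> states ?Z" for r s P
    using prod_nonneg[of X "\<mu> r" "R r" Y "\<nu> s" "S s" P] that effX effY repX repY by blast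
  let ?U = "\<lambda>(c::nat list) z. if z = x0 @ y0 then 1 else (0::real)"
  let ?D = "\<lambda>c z. (\<Sum>rs\<in>OX \<times> OY. ?T (fst rs) (snd rs) c z) - 1 * ?U c z"
  have pairD: "pair ?Z ?D P = (\<Sum>rs\<in>OX \<times> OY. pair ?Z (?T (fst rs) (snd rs)) P) - (\<Sum>c\<in>outputs ?Z. P c (x0 @ y0))" for P
    by (simp only: pair_diffV pair_sumV pair_delta_input[OF z0])
  have totZ: "(\<Sum>rs\<in>OX \<times> OY. pair ?Z (?T (fst rs) (snd rs)) P) = 1" if P: "P \<in> states ?Z" for P
  proof -
    have "\<forall>p\<in>states X. \<forall>q\<in>states Y. pair ?Z ?D (tensor X p q) = 0"
    proof (intro ballI)
      fix p q assume p: "p \<in> states X" and q: "q \<in> states Y"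
      have "(\<Sum>rs\<in>OX \<times> OY. pair ?Z (?T (fst rs) (snd rs)) (tensor X p q)) = (\<Sum>rs\<in>OX \<times> OY. \<mu> (fst rs) p * \<nu> (snd rs) q)"
        using prodv p q by (intro sum.cong refl) auto
      also have "\<dots> = (\<Sum>r\<in>OX. \<Sum>s\<in>OY. \<mu> r p * \<nu> s q)"
        by (simp add: sum.cartesian_product case_prod_beta)
      also have "\<dots> = (\<Sum>r\<in>OX. \<mu> r p) * (\<Sum>s\<in>OY. \<nu> s q)"
        by (simp add: sum_product)
      also have "\<dots> = 1" using totX totY p q by simp
      finally have a: "(\<Sum>rs\<in>OX \<times> OY. pair ?Z (?T (fst rs) (snd rs)) (tensor X p q)) = 1" .
      have "(\<Sum>c\<in>outputs ?Z. tensor X p q c (x0 @ y0)) = 1"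
        using prod_state[OF p q] z0 by (simp add: states_def)
      then show "pair ?Z ?D (tensor X p q) = 0" using a pairD by simp
    qed
    then have "pair ?Z ?D P = 0" using span P by blast
    moreover have "(\<Sum>c\<in>outputs ?Z. P c (x0 @ y0)) = 1" using P z0 by (simp add: states_def)
    ultimately show ?thesis using pairD by simp
  qed
  have le1: "pair ?Z (?T r s) P \<le> 1" if "r \<in> OX" "s \<in> OY" "P \<in> states ?Z" for r s P
  proof -
    have "pair ?Z (?T (fst (r, s)) (snd (r, s))) P \<le> (\<Sum>rs\<in>OX \<times> OY. pair ?Z (?T (fst rs) (snd rs)) P)"
      by (rule member_le_sum) (use that nonneg finX finY in auto)
    then show ?thesis using totZ[OF that(3)] by simp
  qed
  have measZ: "measurement ?Z (OX \<times> OY) ?E"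
    unfolding measurement_def
  proof (intro conjI ballI)
    show "finite (OX \<times> OY)" using finX finY by simp
  next
    fix rs assume rs: "rs \<in> OX \<times> OY"
    obtain r s where rs': "rs = (r, s)" "r \<in> OX" "s \<in> OY" using rs by auto
    show "is_effect ?Z (?E rs)"
      unfolding is_effect_def represents_def
      using rs' nonneg le1 Edef by auto
  next
    fix P assume P: "P \<in> states ?Z"
    show "(\<Sum>rs\<in>OX \<times> OY. ?E rs P) = 1"
      using totZ[OF P] by (simp add: prod_meas_effects_def case_prod_beta)
  qed
  show ?thesis
    unfolding max_informative_def
  proof (intro conjI allI impI)
    show "measurement ?Z (OX \<times> OY) ?E" by (rule measZ)
  next
    fix Ns :: "nat set" and \<nu>' :: "nat \<Rightarrow> vec \<Rightarrow> real" and f :: "nat \<Rightarrow> 'r \<times> 's"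
    assume h: "measurement ?Z Ns \<nu>' \<and> refines_via ?Z Ns \<nu>' f (OX \<times> OY) ?E"
    have mN: "finite Ns" "\<forall>k\<in>Ns. is_effect ?Z (\<nu>' k)" using h by (auto simp: measurement_def)
    have fN: "\<forall>k\<in>Ns. f k \<in> OX \<times> OY" and rfN: "\<forall>rs\<in>OX \<times> OY. \<forall>P\<in>states ?Z. ?E rs P = (\<Sum>j\<in>{j\<in>Ns. f j = rs}. \<nu>' j P)"
      using h by (auto simp: refines_via_def)
    show "trivial_refinement ?Z Ns \<nu>' f ?E"
      unfolding trivial_refinement_def
    proof
      fix k assume k: "k \<in> Ns"
      obtain r s where fk: "f k = (r, s)" and r: "r \<in> OX" and s: "s \<in> OY" using fN k by force
      have ek: "is_effect ?Z (\<nu>' k)" using mN k by blast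
      then obtain V where V: "represents ?Z V (\<nu>' k)" and rng: "\<forall>P\<in>states ?Z. 0 \<le> \<nu>' k P \<and> \<nu>' k P \<le> 1"
        by (auto simp: is_effect_def)
      have bnd: "\<nu>' k P \<le> pair ?Z (?T r s) P" if P: "P \<in> states ?Z" for P
      proof -
        have "\<nu>' k P \<le> (\<Sum>j\<in>{j\<in>Ns. f j = (r, s)}. \<nu>' j P)"
          by (rule member_le_sum) (use k fk mN P in \<open>auto simp: is_effect_def\<close>)
        also have "\<dots> = ?E (r, s) P" using rfN r s P by auto
        finally show ?thesis by (simp add: Edef)
      qed
      have stepB: "\<exists>c. \<forall>p\<in>states X. \<nu>' k (tensor X p q) = c * \<mu> r p" if q: "q \<in> states Y" for q
      proof (rule extremal[OF miX r])
        show "\<forall>p\<in>states X. \<nu>' k (tensor X p q) = pair X (\<lambda>a x. \<Sum>b\<in>outputs Y. \<Sum>y\<in>inputs Y. V (a @ b) (x @ y) * q b y) p"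
          using V prod_state q by (simp add: represents_def pair_tensor_right)
        show "\<forall>p\<in>states X. 0 \<le> \<nu>' k (tensor X p q) \<and> \<nu>' k (tensor X p q) \<le> \<mu> r p"
        proof
          fix p assume p: "p \<in> states X"
          have st: "tensor X p q \<in> states ?Z" using prod_state[OF p q] .
          have "\<nu>' k (tensor X p q) \<le> \<mu> r p * \<nu> s q" using bnd[OF st] prodv[OF r s p q] by simp
          also have "\<dots> \<le> \<mu> r p"
            using effX effY r s p q by (intro mult_left_le) (auto simp: is_effect_def)
          finally show "0 \<le> \<nu>' k (tensor X p q) \<and> \<nu>' k (tensor X p q) \<le> \<mu> r p" using rng st by simp
        qed
      qed
      have stepB': "\<exists>d. \<forall>q\<in>states Y. \<nu>' k (tensor X p q) = d * \<nu> s q" if p: "p \<in> states X" for p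
      proof (rule extremal[OF miY s])
        show "\<forall>q\<in>states Y. \<nu>' k (tensor X p q) = pair Y (\<lambda>b y. \<Sum>a\<in>outputs X. \<Sum>x\<in>inputs X. V (a @ b) (x @ y) * p a x) q"
          using V prod_state p by (simp add: represents_def pair_tensor_left)
        show "\<forall>q\<in>states Y. 0 \<le> \<nu>' k (tensor X p q) \<and> \<nu>' k (tensor X p q) \<le> \<nu> s q"
        proof
          fix q assume q: "q \<in> states Y"
          have st: "tensor X p q \<in> states ?Z" using prod_state[OF p q] .
          have "\<nu>' k (tensor X p q) \<le> \<mu> r p * \<nu> s q" using bnd[OF st] prodv[OF r s p q] by simp
          also have "\<dots> \<le> \<nu> s q"
            using effX effY r s p q by (intro mult_left_le_one_le) (auto simp: is_effect_def)
          finally show "0 \<le> \<nu>' k (tensor X p q) \<and> \<nu>' k (tensor X p q) \<le> \<nu> s q" using rng st by simp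
        qed
      qed
      obtain c0 where c0: "\<forall>p\<in>states X. \<forall>q\<in>states Y. \<nu>' k (tensor X p q) = c0 * (\<mu> r p * \<nu> s q)"
      proof (cases "\<exists>p0\<in>states X. \<mu> r p0 \<noteq> 0")
        case True
        then obtain p0 where p0: "p0 \<in> states X" "\<mu> r p0 \<noteq> 0" by blast
        obtain d0 where d0: "\<forall>q\<in>states Y. \<nu>' k (tensor X p0 q) = d0 * \<nu> s q" using stepB'[OF p0(1)] by blast
        have "\<forall>p\<in>states X. \<forall>q\<in>states Y. \<nu>' k (tensor X p q) = (d0 / \<mu> r p0) * (\<mu> r p * \<nu> s q)"
        proof (intro ballI)
          fix p q assume p: "p \<in> states X" and q: "q \<in> states Y"
          obtain cq where cq: "\<forall>p\<in>states X. \<nu>' k (tensor X p q) = cq * \<mu> r p" using stepB[OF q] by blast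
          have "cq * \<mu> r p0 = d0 * \<nu> s q" using cq d0 p0 q by metis
          then have "cq = d0 * \<nu> s q / \<mu> r p0" using p0(2) by (simp add: field_simps)
          then show "\<nu>' k (tensor X p q) = (d0 / \<mu> r p0) * (\<mu> r p * \<nu> s q)" using cq p by simp
        qed
        then show ?thesis using that by blast
      next
        case False
        have "\<forall>p\<in>states X. \<forall>q\<in>states Y. \<nu>' k (tensor X p q) = 0 * (\<mu> r p * \<nu> s q)"
        proof (intro ballI)
          fix p q assume p: "p \<in> states X" and q: "q \<in> states Y"
          obtain cq where cq: "\<forall>p\<in>states X. \<nu>' k (tensor X p q) = cq * \<mu> r p" using stepB[OF q] by blast
          then show "\<nu>' k (tensor X p q) = 0 * (\<mu> r p * \<nu> s q)" using False p by simp
        qed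
        then show ?thesis using that by blast
      qed
      let ?V' = "\<lambda>c z. V c z - c0 * ?T r s c z"
      have "\<forall>p\<in>states X. \<forall>q\<in>states Y. pair ?Z ?V' (tensor X p q) = 0"
      proof (intro ballI)
        fix p q assume p: "p \<in> states X" and q: "q \<in> states Y"
        have "pair ?Z ?V' (tensor X p q) = \<nu>' k (tensor X p q) - c0 * (\<mu> r p * \<nu> s q)"
          using V prod_state[OF p q] prodv[OF r s p q] by (simp add: pair_diffV represents_def)
        then show "pair ?Z ?V' (tensor X p q) = 0" using c0 p q by simp
      qed
      then have van: "\<forall>P\<in>states ?Z. pair ?Z ?V' P = 0" using span by blast
      have "\<forall>P\<in>states ?Z. \<nu>' k P = c0 * ?E (f k) P"
      proof
        fix P assume P: "P \<in> states ?Z"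
        have "pair ?Z ?V' P = \<nu>' k P - c0 * pair ?Z (?T r s) P"
          using V P by (simp add: pair_diffV represents_def)
        then show "\<nu>' k P = c0 * ?E (f k) P" using van P fk Edef by simp
      qed
      then show "\<exists>c. \<forall>P\<in>states ?Z. \<nu>' k P = c * ?E (f k) P" by blast
    qed
  qed
qed

end
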